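(* Let $\{G_n^\circ\}_{n\ge1}$ be an $H$-linear family of graphs with spiders, and let $a_n=\Gamma_{G_n^\circ}(1)/\mathcal{E}_{G_n^\circ}(1)$. If $\lim_{n\to\infty}a_n=0$, then $$\lim_{n\to\infty}\sup_{x\in\mathbb{R}}\Big|\sum_{0\le i\le x}\frac{\varepsilon_i(G_n^\circ)}{\mathcal{E}_{G_n^\circ}(1)}-\sum_{0\le i\le x}\frac{\tilde\gamma_i(G_n^\circ)}{\tilde\Gamma_{G_n^\circ}(1)}\Big|=0;$$ in particular the limits of the crosscap-number distributions of $G_n^\circ$ are the same as those of the Euler-genus distributions.
   Context: Embeddings are cellular embeddings in closed surfaces counted via general rotation systems up to equivalence. $\gamma_k(G)$, $\tilde\gamma_j(G)$, $\varepsilon_i(G)$ denote the numbers of embeddings of $G$ into the orientable surface of genus $k$, the non-orientable surface with $j$ crosscaps, and surfaces of Euler-genus $i$ (Euler-genus $2k$ for the orientable genus-$k$ surface, $j$ for $j$ crosscaps); $\Gamma_G(x)=\sum\gamma_kx^k$, $\tilde\Gamma_G(x)=\sum\tilde\gamma_jx^j$, $\mathcal{E}_G(x)=\sum\varepsilon_ix^i$. $H$-linear family with spiders: $H$ is a connected graph with disjoint vertex sets $\{u_1,\dots,u_s\}$, $\{v_1,\dots,v_s\}$; $H_i$ copies of $H$ with $u_{i,j},v_{i,j}$ the copies of $u_j,v_j$; $G_1=H_1$ and $G_n$ is obtained from $G_{n-1}$ and $H_n$ by identifying $v_{n-1,j}$ with $u_{n,j}$ for all $j$; $G_n^\circ$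 is obtained from $G_n$ by attaching fixed rooted graphs (spiders) at some of the vertices $u_{1,i}$ and $v_{n,i}$ by identifying them with root vertices of the spiders. *)

theory Defs
  imports Complex_Main
begin

record ('v,'e) mgraph =
  verts :: "'v set"
  edges :: "'e set"
  ends  :: "'e \<Rightarrow> 'v \<times> 'v"

definition wf_graph :: "('v,'e) mgraph \<Rightarrow> bool" where
  "wf_graph G \<longleftrightarrow> finite (verts G) \<and> finite (edges G) \<and>
     (\<forall>e\<in>edges G. fst (ends G e) \<in> verts G \<and> snd (ends G e) \<in> verts G)"

definition adj :: "('v,'e) mgraph \<Rightarrow> 'v \<Rightarrow> 'v \<Rightarrow> bool" where
  "adj G x y \<longleftrightarrow> (\<exists>e\<in>edges G. ends G e = (x,y) \<or> ends G e = (y,x))"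

definition connected_graph :: "('v,'e) mgraph \<Rightarrow> bool" where
  "connected_graph G \<longleftrightarrow> verts G \<noteq> {} \<and> (\<forall>x\<in>verts G. \<forall>y\<in>verts G. (adj G)\<^sup>*\<^sup>* x y)"

text \<open>A dart is an edge together with one of its two ends: (e,True) sits at the
first end of e, (e,False) at the second end.\<close>

definition darts :: "('v,'e) mgraph \<Rightarrow> ('e \<times> bool) set" where
  "darts G = edges G \<times> (UNIV :: bool set)"

definition dvert :: "('v,'e) mgraph \<Rightarrow> 'e \<times> bool \<Rightarrow> 'v" where
  "dvert G d = (if snd d then fst (ends G (fst d)) else snd (ends G (fst d)))"

definition opp :: "'e \<times> bool \<Rightarrow> 'e \<times> bool" where
  "opp d = (fst d, \<not> snd d)"

definition is_rotation :: "('v,'e) mgraph \<Rightarrow> ('e \<times> bool \<Rightarrow> 'e \<times> bool) \<Rightarrow> bool" where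
  "is_rotation G \<rho> \<longleftrightarrow> bij \<rho> \<and> (\<forall>d. d \<notin> darts G \<longrightarrow> \<rho> d = d) \<and>
     (\<forall>d\<in>darts G. \<rho> d \<in> darts G \<and> dvert G (\<rho> d) = dvert G d) \<and>
     (\<forall>d\<in>darts G. \<forall>d'\<in>darts G. dvert G d = dvert G d' \<longrightarrow> (\<exists>k. (\<rho> ^^ k) d = d'))"

text \<open>A general rotation system: a rotation plus an edge signature
(True = twisted edge), the signature being False outside the edge set.\<close>

definition grs :: "('v,'e) mgraph \<Rightarrow> (('e \<times> bool \<Rightarrow> 'e \<times> bool) \<times> ('e \<Rightarrow> bool)) set" where
  "grs G = {(\<rho>, tw). is_rotation G \<rho> \<and> (\<forall>e. e \<notin> edges G \<longrightarrow> \<not> tw e)}"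

definition vflip :: "('v,'e) mgraph \<Rightarrow> 'v \<Rightarrow>
    ('e \<times> bool \<Rightarrow> 'e \<times> bool) \<times> ('e \<Rightarrow> bool) \<Rightarrow> ('e \<times> bool \<Rightarrow> 'e \<times> bool) \<times> ('e \<Rightarrow> bool)" where
  "vflip G v r = ((\<lambda>d. if d \<in> darts G \<and> dvert G d = v then inv (fst r) d else fst r d),
                  (\<lambda>e. if e \<in> edges G \<and> ((fst (ends G e) = v) \<noteq> (snd (ends G e) = v))
                        then \<not> snd r e else snd r e))"

definition grs_equiv :: "('v,'e) mgraph \<Rightarrow>
    ('e \<times> bool \<Rightarrow> 'e \<times> bool) \<times> ('e \<Rightarrow> bool) \<Rightarrow> ('e \<times> bool \<Rightarrow> 'e \<times> bool) \<times> ('e \<Rightarrow> bool) \<Rightarrow> bool" where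
  "grs_equiv G = (\<lambda>x y. \<exists>v\<in>verts G. y = vflip G v x)\<^sup>*\<^sup>*"

text \<open>A state is a dart together with the current local orientation;
one step traverses the edge of the dart (flipping orientation if the edge is
twisted) and then turns by the rotation (or its inverse) at the far end. Every
face boundary walk is traced exactly twice (once in each direction).\<close>

definition fstep :: "('e \<times> bool \<Rightarrow> 'e \<times> bool) \<times> ('e \<Rightarrow> bool) \<Rightarrow>
    ('e \<times> bool) \<times> bool \<Rightarrow> ('e \<times> bool) \<times> bool" where
  "fstep r st = (let d = fst st; s' = (snd st \<noteq> snd r (fst d)); d' = opp d
                 in (if s' then fst r d' else inv (fst r) d', s'))"

definition face_orbits :: "('v,'e) mgraph \<Rightarrow> ('e \<times> bool \<Rightarrow> 'e \<times> bool) \<times> ('e \<Rightarrow> bool)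
    \<Rightarrow> (('e \<times> bool) \<times> bool) set set" where
  "face_orbits G r = (\<lambda>x. {(fstep r ^^ k) x | k. True}) ` (darts G \<times> UNIV)"

definition nfaces :: "('v,'e) mgraph \<Rightarrow> ('e \<times> bool \<Rightarrow> 'e \<times> bool) \<times> ('e \<Rightarrow> bool) \<Rightarrow> nat" where
  "nfaces G r = (if edges G = {} then 1 else card (face_orbits G r) div 2)"

definition euler_genus :: "('v,'e) mgraph \<Rightarrow> ('e \<times> bool \<Rightarrow> 'e \<times> bool) \<times> ('e \<Rightarrow> bool) \<Rightarrow> nat" where
  "euler_genus G r = nat (2 - int (card (verts G)) + int (card (edges G)) - int (nfaces G r))"

definition embeddings :: "('v,'e) mgraph \<Rightarrow>
    (('e \<times> bool \<Rightarrow> 'e \<times> bool) \<times> ('e \<Rightarrow> bool)) set set" where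
  "embeddings G = {{y \<in> grs G. grs_equiv G x y} | x. x \<in> grs G}"

definition orientable_emb :: "(('e \<times> bool \<Rightarrow> 'e \<times> bool) \<times> ('e \<Rightarrow> bool)) set \<Rightarrow> bool" where
  "orientable_emb C \<longleftrightarrow> (\<exists>r\<in>C. \<forall>e. \<not> snd r e)"

definition emb_egenus :: "('v,'e) mgraph \<Rightarrow> (('e \<times> bool \<Rightarrow> 'e \<times> bool) \<times> ('e \<Rightarrow> bool)) set \<Rightarrow> nat \<Rightarrow> bool" where
  "emb_egenus G C i \<longleftrightarrow> (\<exists>r\<in>C. euler_genus G r = i)"

text \<open>\<open>eps G i\<close> = \<open>\<epsilon>_i(G)\<close>, \<open>gam G k\<close> = \<open>\<gamma>_k(G)\<close>, \<open>cgam G j\<close> = \<open>\<tilde>\<gamma>_j(G)\<close>.\<close>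

definition eps :: "('v,'e) mgraph \<Rightarrow> nat \<Rightarrow> nat" where
  "eps G i = card {C \<in> embeddings G. emb_egenus G C i}"

definition gam :: "('v,'e) mgraph \<Rightarrow> nat \<Rightarrow> nat" where
  "gam G k = card {C \<in> embeddings G. orientable_emb C \<and> emb_egenus G C (2 * k)}"

definition cgam :: "('v,'e) mgraph \<Rightarrow> nat \<Rightarrow> nat" where
  "cgam G j = card {C \<in> embeddings G. \<not> orientable_emb C \<and> emb_egenus G C j}"

text \<open>Values of the polynomials at x = 1, i.e. total numbers of (orientable,
non-orientable, all) embeddings.\<close>

definition Gamma1 :: "('v,'e) mgraph \<Rightarrow> nat" where
  "Gamma1 G = card {C \<in> embeddings G. orientable_emb C}"

definition tGamma1 :: "('v,'e) mgraph \<Rightarrow> nat" where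
  "tGamma1 G = card {C \<in> embeddings G. \<not> orientable_emb C}"

definition Eps1 :: "('v,'e) mgraph \<Rightarrow> nat" where
  "Eps1 G = card (embeddings G)"

text \<open>Vertex (i,x) is the copy of x in H_i; the copy u_{i,j} (i \<ge> 2) is
identified with v_{i-1,j} and represented by (i-1, v_j).\<close>

definition lin_vert :: "'v list \<Rightarrow> 'v list \<Rightarrow> nat \<times> 'v \<Rightarrow> nat \<times> 'v" where
  "lin_vert us vs p = (if 1 < fst p \<and> snd p \<in> set us
      then (fst p - 1, vs ! (THE j. j < length us \<and> us ! j = snd p)) else p)"

text \<open>Data: H with vertex lists us = [u_1..u_s], vs = [v_1..v_s]; spiders SL j (root rL j)
attached at u_{1,j+1} for j \<in> L and SR j (root rR j) attached at v_{n,j+1} for j \<in> R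
(0-based indices).\<close>

definition hlinear_data :: "('v,'e) mgraph \<Rightarrow> 'v list \<Rightarrow> 'v list \<Rightarrow> nat set \<Rightarrow> nat set \<Rightarrow>
    (nat \<Rightarrow> ('w,'f) mgraph) \<Rightarrow> (nat \<Rightarrow> ('w,'f) mgraph) \<Rightarrow> (nat \<Rightarrow> 'w) \<Rightarrow> (nat \<Rightarrow> 'w) \<Rightarrow> bool" where
  "hlinear_data H us vs L R SL SR rL rR \<longleftrightarrow>
     wf_graph H \<and> connected_graph H \<and>
     0 < length us \<and> length vs = length us \<and> distinct us \<and> distinct vs \<and>
     set us \<inter> set vs = {} \<and> set us \<subseteq> verts H \<and> set vs \<subseteq> verts H \<and>
     L \<subseteq> {..<length us} \<and> R \<subseteq> {..<length us} \<and>
     (\<forall>j\<in>L. wf_graph (SL j) \<and> connected_graph (SL j) \<and> rL j \<in> verts (SL j)) \<and>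
     (\<forall>j\<in>R. wf_graph (SR j) \<and> connected_graph (SR j) \<and> rR j \<in> verts (SR j))"

definition Gcirc :: "('v,'e) mgraph \<Rightarrow> 'v list \<Rightarrow> 'v list \<Rightarrow> nat set \<Rightarrow> nat set \<Rightarrow>
    (nat \<Rightarrow> ('w,'f) mgraph) \<Rightarrow> (nat \<Rightarrow> ('w,'f) mgraph) \<Rightarrow> (nat \<Rightarrow> 'w) \<Rightarrow> (nat \<Rightarrow> 'w) \<Rightarrow> nat \<Rightarrow>
    ((nat \<times> 'v) + (bool \<times> nat \<times> 'w), (nat \<times> 'e) + (bool \<times> nat \<times> 'f)) mgraph" where
  "Gcirc H us vs L R SL SR rL rR n =
    (let lv = lin_vert us vs;
         Sp = (\<lambda>b j. if b then SL j else SR j);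
         Idx = (\<lambda>b. if b then L else R);
         rt = (\<lambda>b j. if b then rL j else rR j);
         sv = (\<lambda>b j w. if w = rt b j
                        then Inl (if b then (1, us ! j) else (n, vs ! j))
                        else Inr (b, j, w))
     in \<lparr> verts = Inl ` (lv ` ({1..n} \<times> verts H)) \<union>
                  {Inr (b, j, w) | b j w. j \<in> Idx b \<and> w \<in> verts (Sp b j) \<and> w \<noteq> rt b j},
          edges = Inl ` ({1..n} \<times> edges H) \<union>
                  {Inr (b, j, f) | b j f. j \<in> Idx b \<and> f \<in> edges (Sp b j)},
          ends = (\<lambda>ed. case ed of
                     Inl (i, e) \<Rightarrow> (Inl (lv (i, fst (ends H e))), Inl (lv (i, snd (ends H e))))
                   | Inr (b, j, f) \<Rightarrow> (sv b j (fst (ends (Sp b j) f)), sv b j (snd (ends (Sp b j) f)))) \<rparr>)"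

end

theory Submission
  imports Defs
begin

definition InvR :: "('v,'e) mgraph \<Rightarrow> ('e \<times> bool \<Rightarrow> 'e \<times> bool) \<Rightarrow> bool" where
  "InvR G \<rho> \<longleftrightarrow> bij \<rho> \<and> (\<forall>d. \<rho> d \<in> darts G \<longleftrightarrow> d \<in> darts G) \<and>
     (\<forall>d\<in>darts G. dvert G (\<rho> d) = dvert G d)"

lemma rot_InvR: "is_rotation G \<rho> \<Longrightarrow> InvR G \<rho>"
  unfolding is_rotation_def InvR_def by metis

definition rflip :: "('v,'e) mgraph \<Rightarrow> 'v \<Rightarrow> ('e \<times> bool \<Rightarrow> 'e \<times> bool) \<Rightarrow> ('e \<times> bool \<Rightarrow> 'e \<times> bool)" where
  "rflip G v \<rho> = (\<lambda>d. if d \<in> darts G \<and> dvert G d = v then inv \<rho> d else \<rho> d)"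

definition rflip2 :: "('v,'e) mgraph \<Rightarrow> 'v \<Rightarrow> ('e \<times> bool \<Rightarrow> 'e \<times> bool) \<Rightarrow> ('e \<times> bool \<Rightarrow> 'e \<times> bool)" where
  "rflip2 G v \<rho> = (\<lambda>d. if d \<in> darts G \<and> dvert G d = v then \<rho> d else inv \<rho> d)"

lemma InvR_inv:
  assumes "InvR G \<rho>"
  shows "inv \<rho> d \<in> darts G \<longleftrightarrow> d \<in> darts G"
    and "d \<in> darts G \<Longrightarrow> dvert G (inv \<rho> d) = dvert G d"
    and "\<rho> (inv \<rho> d) = d" and "inv \<rho> (\<rho> d) = d"
proof -
  have b: "bij \<rho>" using assms unfolding InvR_def by auto
  show 3: "\<rho> (inv \<rho> d) = d" using b by (simp add: bij_is_surj surj_f_inv_f)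
  show "inv \<rho> (\<rho> d) = d" using b by (simp add: bij_is_inj)
  show 1: "inv \<rho> d \<in> darts G \<longleftrightarrow> d \<in> darts G" using assms 3 unfolding InvR_def by metis
  show "d \<in> darts G \<Longrightarrow> dvert G (inv \<rho> d) = dvert G d" using assms 1 3 unfolding InvR_def by metis
qed

lemma rflip_inv:
  assumes "InvR G \<rho>"
  shows "inv (rflip G v \<rho>) = rflip2 G v \<rho>"
  using InvR_inv[OF assms] assms
  by (intro inv_equality) (auto simp: rflip_def rflip2_def InvR_def)

lemma rflip_InvR:
  assumes "InvR G \<rho>"
  shows "InvR G (rflip G v \<rho>)"
proof -
  have "bij (rflip G v \<rho>)"
    apply (rule bij_betw_byWitness[where f'="rflip2 G v \<rho>"])
    using InvR_inv[OF assms] assms by (auto simp: rflip_def rflip2_def InvR_def)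
  then show ?thesis
    using InvR_inv[OF assms] assms by (auto simp: rflip_def InvR_def)
qed

lemma fst_vflip: "fst (vflip G v r) = rflip G v (fst r)"
  by (simp add: vflip_def rflip_def)

definition phi :: "('v,'e) mgraph \<Rightarrow> 'v \<Rightarrow> ('e \<times> bool) \<times> bool \<Rightarrow> ('e \<times> bool) \<times> bool" where
  "phi G v st = (fst st, snd st \<noteq> (fst st \<in> darts G \<and> dvert G (fst st) = v))"

lemma phi_phi[simp]: "phi G v (phi G v st) = st"
  by (cases st) (auto simp: phi_def)

lemma dvert_opp: "dvert G (opp d) = (if snd d then snd (ends G (fst d)) else fst (ends G (fst d)))"
  by (simp add: dvert_def opp_def)

lemma opp_darts: "opp d \<in> darts G \<longleftrightarrow> d \<in> darts G"
  by (cases d) (simp add: darts_def opp_def)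

definition twflip :: "('v,'e) mgraph \<Rightarrow> 'v \<Rightarrow> ('e \<Rightarrow> bool) \<Rightarrow> 'e \<Rightarrow> bool" where
  "twflip G v tw = (\<lambda>e. if e \<in> edges G \<and> ((fst (ends G e) = v) \<noteq> (snd (ends G e) = v))
                        then \<not> tw e else tw e)"

lemma "fst (\<rho>, tw) = \<rho>" by simp
lemma "inv (fst (\<rho>, tw)) = inv \<rho>" by simp
lemma vflip_eq: "vflip G v (\<rho>, tw) = (rflip G v \<rho>, twflip G v tw)"
  unfolding vflip_def rflip_def twflip_def apply (simp only: fst_conv snd_conv)
  done

lemma commute0:
  assumes I: "InvR G \<rho>"
  shows "fstep (rflip G v \<rho>, twflip G v tw) (phi G v (d, s)) = phi G v (fstep (\<rho>, tw) (d, s))"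
proof -
  note ii = InvR_inv[OF I]
  have rd: "\<And>x. \<rho> x \<in> darts G \<longleftrightarrow> x \<in> darts G" "\<And>x. x \<in> darts G \<Longrightarrow> dvert G (\<rho> x) = dvert G x"
    using I unfolding InvR_def by auto
  have A: "fstep (rflip G v \<rho>, twflip G v tw) (phi G v (d, s)) =
     (let s' = ((s \<noteq> (d \<in> darts G \<and> dvert G d = v)) \<noteq> twflip G v tw (fst d)); d' = opp d
                 in (if s' then rflip G v \<rho> d' else rflip2 G v \<rho> d', s'))"
    unfolding fstep_def phi_def by (simp only: fst_conv snd_conv rflip_inv[OF I] Let_def)
  show ?thesis
  proof (cases "d \<in> darts G")
    case False
    then have "fst d \<notin> edges G" by (cases d) (auto simp: darts_def)
    moreover have "opp d \<notin> darts G" using False opp_darts by metis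
    ultimately show ?thesis using False unfolding A
      by (simp add: fstep_def phi_def Let_def twflip_def rflip_def rflip2_def ii rd)
  next
    case True
    then have e: "fst d \<in> edges G" by (cases d) (auto simp: darts_def)
    have od: "opp d \<in> darts G" using True opp_darts by metis
    have dv: "dvert G d = (if snd d then fst (ends G (fst d)) else snd (ends G (fst d)))"
      by (simp add: dvert_def)
    show ?thesis using True e od unfolding A
      apply (simp add: fstep_def phi_def Let_def twflip_def rflip_def rflip2_def ii rd)
      apply (cases "snd d"; simp add: dv dvert_opp)
      apply (auto simp: ii rd)
      done
  qed
qed

lemma commute:
  assumes "InvR G (fst r)"
  shows "fstep (vflip G v r) (phi G v st) = phi G v (fstep r st)"
  using commute0[of G "fst r" v "snd r" "fst st" "snd st"] assms
  by (cases r; cases st) (simp add: vflip_eq)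

lemma iter_commute:
  assumes "InvR G (fst r)"
  shows "(fstep (vflip G v r) ^^ k) (phi G v x) = phi G v ((fstep r ^^ k) x)"
  by (induction k) (simp_all add: commute[OF assms])

lemma face_orbits_vflip:
  assumes "InvR G (fst r)"
  shows "face_orbits G (vflip G v r) = (\<lambda>X. phi G v ` X) ` face_orbits G r"
proof -
  let ?D = "darts G \<times> (UNIV :: bool set)"
  have D: "?D = phi G v ` ?D"
  proof
    show "?D \<subseteq> phi G v ` ?D"
    proof
      fix x assume "x \<in> ?D"
      then have "phi G v x \<in> ?D" by (cases x) (auto simp: phi_def)
      then show "x \<in> phi G v ` ?D" using phi_phi by (metis image_eqI)
    qed
    show "phi G v ` ?D \<subseteq> ?D" by (auto simp: phi_def)
  qed
  have "face_orbits G (vflip G v r) = (\<lambda>x. {(fstep (vflip G v r) ^^ k) x | k. True}) ` (phi G v ` ?D)"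
    unfolding face_orbits_def using D by simp
  also have "\<dots> = (\<lambda>x. {(fstep (vflip G v r) ^^ k) (phi G v x) | k. True}) ` ?D"
    by (simp add: image_image)
  also have "\<dots> = (\<lambda>x. phi G v ` {(fstep r ^^ k) x | k. True}) ` ?D"
  proof -
    have eq: "\<And>x. {phi G v ((fstep r ^^ k) x) | k. True} = phi G v ` {(fstep r ^^ k) x | k. True}"
      by auto
    show ?thesis by (simp only: iter_commute[OF assms] eq)
  qed
  also have "\<dots> = (\<lambda>X. phi G v ` X) ` face_orbits G r"
    unfolding face_orbits_def by (simp add: image_image)
  finally show ?thesis .
qed

lemma nfaces_vflip:
  assumes "InvR G (fst r)"
  shows "nfaces G (vflip G v r) = nfaces G r"
proof -
  have inj: "inj (phi G v)" by (metis injI phi_phi)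
  have "inj_on (\<lambda>X. phi G v ` X) (face_orbits G r)"
    using inj by (simp add: inj_on_def inj_image_eq_iff)
  then have "card (face_orbits G (vflip G v r)) = card (face_orbits G r)"
    by (simp add: face_orbits_vflip[OF assms] card_image)
  then show ?thesis by (simp add: nfaces_def)
qed

lemma equiv_inv:
  assumes "grs_equiv G x y" "InvR G (fst x)"
  shows "InvR G (fst y) \<and> nfaces G y = nfaces G x"
  using assms unfolding grs_equiv_def
proof (induction rule: rtranclp_induct)
  case base then show ?case by simp
next
  case (step y z)
  then obtain v where z: "z = vflip G v y" by auto
  from step have I: "InvR G (fst y)" by simp
  show ?case using step I z nfaces_vflip[OF I] rflip_InvR[OF I] by (simp add: fst_vflip)
qed

lemma equiv_genus:
  assumes "grs_equiv G x y" "InvR G (fst x)"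
  shows "euler_genus G y = euler_genus G x"
  using equiv_inv[OF assms] by (simp add: euler_genus_def)

lemma real_ineq:
  fixes A B Oo N E :: real
  assumes "0 \<le> A" "A \<le> Oo" "0 \<le> B" "B \<le> N" "E = Oo + N"
  shows "\<bar>(A + B) / E - B / N\<bar> \<le> 2 * (Oo / E)"
proof -
  have O0: "0 \<le> Oo" using assms(1,2) by linarith
  have N0: "0 \<le> N" using assms(3,4) by linarith
  have E0: "0 \<le> E" using O0 N0 assms(5) by linarith
  have q0: "0 \<le> Oo / E" using O0 E0 by simp
  show ?thesis
  proof (cases "N = 0")
    case True
    then have B0: "B = 0" using assms(3,4) by linarith
    have "\<bar>(A + B) / E - B / N\<bar> = A / E" using B0 assms(1) E0 by simp
    also have "\<dots> \<le> Oo / E" using assms(2) E0 by (simp add: divide_right_mono)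
    also have "\<dots> \<le> 2 * (Oo / E)" using q0 by linarith
    finally show ?thesis .
  next
    case False
    then have N: "N > 0" using N0 by linarith
    have E: "E > 0" using O0 N assms(5) by linarith
    have "(A + B) / E - B / N = ((A + B) * N - B * E) / (E * N)"
      using N E by (simp add: field_simps)
    also have "(A + B) * N - B * E = A * N - B * Oo" unfolding assms(5) by (simp add: algebra_simps)
    finally have eq: "(A + B) / E - B / N = (A * N - B * Oo) / (E * N)" .
    have EN: "0 < E * N" using E N by simp
    have "\<bar>(A + B) / E - B / N\<bar> = \<bar>A * N - B * Oo\<bar> / (E * N)" unfolding eq
      using EN by (simp add: abs_divide)
    also have "\<dots> \<le> (2 * Oo * N) / (E * N)"
    proof (rule divide_right_mono)
      have "A * N \<le> Oo * N" using assms(2) N by (simp add: mult_right_mono)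
      moreover have "B * Oo \<le> N * Oo" using assms(4) O0 by (simp add: mult_right_mono)
      moreover have "0 \<le> A * N" "0 \<le> B * Oo" using assms(1,3) N O0 by auto
      ultimately show "\<bar>A * N - B * Oo\<bar> \<le> 2 * Oo * N" by (simp add: abs_le_iff) (simp add: algebra_simps)
      show "0 \<le> E * N" using E N by simp
    qed
    also have "\<dots> = 2 * (Oo / E)" using N by (simp add: field_simps)
    finally show ?thesis .
  qed
qed

lemma sum_card_fibers:
  assumes "finite K" "finite S"
  shows "(\<Sum>i\<in>S. card {C\<in>K. g C = i \<and> R C}) = card {C\<in>K. g C \<in> S \<and> R C}"
proof -
  have "(\<Sum>i\<in>S. card {C\<in>K. g C = i \<and> R C}) = card (\<Union>i\<in>S. {C\<in>K. g C = i \<and> R C})"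
    using assms by (subst card_UN_disjoint) auto
  also have "(\<Union>i\<in>S. {C\<in>K. g C = i \<and> R C}) = {C\<in>K. g C \<in> S \<and> R C}" by auto
  finally show ?thesis .
qed

lemma key:
  fixes K :: "'c set" and P :: "'c \<Rightarrow> bool" and Q :: "'c \<Rightarrow> nat \<Rightarrow> bool"
  assumes fin: "finite K" "finite S" and uq: "\<forall>C\<in>K. \<exists>i. \<forall>j. Q C j \<longleftrightarrow> j = i"
  shows "\<bar>(\<Sum>i\<in>S. real (card {C\<in>K. Q C i}) / real (card K))
          - (\<Sum>i\<in>S. real (card {C\<in>K. \<not> P C \<and> Q C i}) / real (card {C\<in>K. \<not> P C}))\<bar>
         \<le> 2 * (real (card {C\<in>K. P C}) / real (card K))"
proof -
  define g where "g C = (SOME i. \<forall>j. Q C j \<longleftrightarrow> j = i)" for C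
  have hg: "Q C j \<longleftrightarrow> j = g C" if CK: "C \<in> K" for C j
  proof -
    obtain i where "\<forall>j. Q C j \<longleftrightarrow> j = i" using bspec[OF uq CK] by (rule exE)
    then have "\<forall>j. Q C j \<longleftrightarrow> j = g C" unfolding g_def by (rule someI)
    then show ?thesis by (rule spec)
  qed
  have e1: "{C\<in>K. Q C i} = {C\<in>K. g C = i \<and> True}" for i using hg by auto
  have e2: "{C\<in>K. \<not> P C \<and> Q C i} = {C\<in>K. g C = i \<and> \<not> P C}" for i using hg by auto
  define A where "A = card {C\<in>K. g C \<in> S \<and> P C}"
  define B where "B = card {C\<in>K. g C \<in> S \<and> \<not> P C}"
  define Oo where "Oo = card {C\<in>K. P C}"
  define N where "N = card {C\<in>K. \<not> P C}"
  have s1: "(\<Sum>i\<in>S. card {C\<in>K. Q C i}) = A + B"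
  proof -
    have "(\<Sum>i\<in>S. card {C\<in>K. Q C i}) = card {C\<in>K. g C \<in> S \<and> True}"
      unfolding e1 by (rule sum_card_fibers[OF fin, of g "\<lambda>_. True"])
    also have "{C\<in>K. g C \<in> S \<and> True} = {C\<in>K. g C \<in> S \<and> P C} \<union> {C\<in>K. g C \<in> S \<and> \<not> P C}" by auto
    also have "card \<dots> = A + B" unfolding A_def B_def using fin by (subst card_Un_disjoint) auto
    finally show ?thesis .
  qed
  have s2: "(\<Sum>i\<in>S. card {C\<in>K. \<not> P C \<and> Q C i}) = B"
    unfolding e2 B_def by (rule sum_card_fibers[OF fin, of g "\<lambda>C. \<not> P C"])
  have EK: "card K = Oo + N"
  proof -
    have "K = {C\<in>K. P C} \<union> {C\<in>K. \<not> P C}" by auto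
    then have "card K = card ({C\<in>K. P C} \<union> {C\<in>K. \<not> P C})" by (rule arg_cong[where f=card])
    also have "\<dots> = Oo + N" unfolding Oo_def N_def using fin by (subst card_Un_disjoint) auto
    finally show ?thesis .
  qed
  have AO: "A \<le> Oo" unfolding A_def Oo_def using fin by (intro card_mono) auto
  have BN: "B \<le> N" unfolding B_def N_def using fin by (intro card_mono) auto
  have l: "(\<Sum>i\<in>S. real (card {C\<in>K. Q C i}) / real (card K)) = (real A + real B) / real (card K)"
    by (simp add: sum_divide_distrib[symmetric] s1 flip: of_nat_sum)
  have r: "(\<Sum>i\<in>S. real (card {C\<in>K. \<not> P C \<and> Q C i}) / real (card {C\<in>K. \<not> P C})) = real B / real N"
    by (simp add: sum_divide_distrib[symmetric] s2 N_def flip: of_nat_sum)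
  have EK': "real (card K) = real Oo + real N" using EK by simp
  show ?thesis unfolding l r Oo_def[symmetric]
  proof (rule real_ineq)
    show "0 \<le> real A" by (rule of_nat_0_le_iff)
    show "0 \<le> real B" by (rule of_nat_0_le_iff)
    show "real A \<le> real Oo" using AO by (rule of_nat_mono)
    show "real B \<le> real N" using BN by (rule of_nat_mono)
    show "real (card K) = real Oo + real N" by (rule EK')
  qed
qed

lemma finite_grs:
  assumes fe: "finite (edges G)"
  shows "finite (grs G)"
proof -
  define A where "A = darts G"
  have fA: "finite A" unfolding A_def darts_def using fe by simp
  define F where "F = {f. \<forall>x. (x \<in> A \<longrightarrow> f x \<in> A) \<and> (x \<notin> A \<longrightarrow> f x = undefined)}"
  have fF: "finite F" unfolding F_def by (rule finite_set_of_finite_funs[OF fA fA])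
  define R where "R = {\<rho>. \<forall>x. (x \<in> A \<longrightarrow> \<rho> x \<in> A) \<and> (x \<notin> A \<longrightarrow> \<rho> x = x)}"
  have "R \<subseteq> (\<lambda>f x. if x \<in> A then f x else x) ` F"
  proof
    fix \<rho> assume r: "\<rho> \<in> R"
    let ?f = "\<lambda>x. if x \<in> A then \<rho> x else undefined"
    show "\<rho> \<in> (\<lambda>f x. if x \<in> A then f x else x) ` F"
    proof (rule image_eqI[where x="?f"])
      show "?f \<in> F" using r unfolding R_def F_def by auto
      show "\<rho> = (\<lambda>f x. if x \<in> A then f x else x) ?f" using r unfolding R_def by auto
    qed
  qed
  then have fR: "finite R" using fF finite_surj by blast
  define T where "T = {tw :: _ \<Rightarrow> bool. \<forall>x. (x \<in> edges G \<longrightarrow> tw x \<in> UNIV) \<and> (x \<notin> edges G \<longrightarrow> tw x = False)}"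
  have fT: "finite T" unfolding T_def using fe by (intro finite_set_of_finite_funs) auto
  have "grs G \<subseteq> R \<times> T"
    unfolding grs_def R_def T_def A_def is_rotation_def by auto
  then show ?thesis using fR fT finite_subset by blast
qed

lemma finite_emb: "finite (edges G) \<Longrightarrow> finite (embeddings G)"
proof -
  assume "finite (edges G)"
  then have "finite ((\<lambda>x. {y \<in> grs G. grs_equiv G x y}) ` grs G)" using finite_grs by blast
  moreover have "embeddings G = (\<lambda>x. {y \<in> grs G. grs_equiv G x y}) ` grs G"
    unfolding embeddings_def by blast
  ultimately show ?thesis by simp
qed

lemma uq_genus: "\<forall>C\<in>embeddings G. \<exists>i. \<forall>j. emb_egenus G C j \<longleftrightarrow> j = i"
proof
  fix C assume "C \<in> embeddings G"
  then obtain x where x: "x \<in> grs G" and C: "C = {y \<in> grs G. grs_equiv G x y}"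
    unfolding embeddings_def by blast
  have I: "InvR G (fst x)" using x unfolding grs_def by (auto intro: rot_InvR)
  have xC: "x \<in> C" using x C unfolding grs_equiv_def by auto
  have g: "euler_genus G r = euler_genus G x" if "r \<in> C" for r
    using that C equiv_genus[OF _ I] by blast
  have "emb_egenus G C j \<longleftrightarrow> j = euler_genus G x" for j
    unfolding emb_egenus_def using g xC by metis
  then show "\<exists>i. \<forall>j. emb_egenus G C j \<longleftrightarrow> j = i" by blast
qed

lemma finite_edges_Gcirc:
  fixes H :: "('v,'e) mgraph" and SL SR :: "nat \<Rightarrow> ('w,'f) mgraph"
  assumes "hlinear_data H us vs L R SL SR rL rR"
  shows "finite (edges (Gcirc H us vs L R SL SR rL rR n))"
proof -
  have fH: "finite (edges H)" and fL: "finite L" and fR: "finite R"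
    and sl: "\<forall>j\<in>L. finite (edges (SL j))" and sr: "\<forall>j\<in>R. finite (edges (SR j))"
    using assms unfolding hlinear_data_def wf_graph_def by (auto intro: finite_subset)
  have f1: "finite (Inl ` ({1..n} \<times> edges H) :: ((nat \<times> 'e) + (bool \<times> nat \<times> 'f)) set)"
    using fH by simp
  have f2: "finite (Inr ` ({True} \<times> Sigma L (\<lambda>j. edges (SL j)) \<union> {False} \<times> Sigma R (\<lambda>j. edges (SR j)))
     :: ((nat \<times> 'e) + (bool \<times> nat \<times> 'f)) set)"
    using fL fR sl sr by auto
  have sub: "edges (Gcirc H us vs L R SL SR rL rR n) \<subseteq> Inl ` ({1..n} \<times> edges H) \<union>
     Inr ` ({True} \<times> Sigma L (\<lambda>j. edges (SL j)) \<union> {False} \<times> Sigma R (\<lambda>j. edges (SR j)))"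
    unfolding Gcirc_def Let_def by (auto split: if_splits)
  show ?thesis using finite_subset[OF sub] f1 f2 by blast
qed

lemma bound_n:
  assumes "finite (edges G)"
  shows "\<bar>(\<Sum>i\<in>{i::nat. real i \<le> x}. real (eps G i) / real (Eps1 G))
            - (\<Sum>i\<in>{i::nat. real i \<le> x}. real (cgam G i) / real (tGamma1 G))\<bar>
         \<le> 2 * (real (Gamma1 G) / real (Eps1 G))"
proof -
  have fS: "finite {i::nat. real i \<le> x}"
  proof (rule finite_subset)
    show "{i::nat. real i \<le> x} \<subseteq> {..nat \<lceil>x\<rceil>}"
    proof
      fix i :: nat assume "i \<in> {i::nat. real i \<le> x}"
      then have "real i \<le> x" by simp
      then have "int i \<le> \<lceil>x\<rceil>" by linarith
      then show "i \<in> {..nat \<lceil>x\<rceil>}" by simp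
    qed
  qed simp
  show ?thesis
    unfolding eps_def cgam_def Eps1_def tGamma1_def Gamma1_def
    by (rule key[OF finite_emb[OF assms] fS uq_genus])
qed

theorem mainTheorem4:
  fixes H :: "('v,'e) mgraph" and us vs :: "'v list" and L R :: "nat set"
    and SL SR :: "nat \<Rightarrow> ('w,'f) mgraph" and rL rR :: "nat \<Rightarrow> 'w"
  assumes fam: "hlinear_data H us vs L R SL SR rL rR"
    and lim: "(\<lambda>n. real (Gamma1 (Gcirc H us vs L R SL SR rL rR n))
                  / real (Eps1 (Gcirc H us vs L R SL SR rL rR n))) \<longlonglongrightarrow> 0"
  shows "(\<lambda>n. SUP x::real. \<bar>(\<Sum>i\<in>{i::nat. real i \<le> x}.
              real (eps (Gcirc H us vs L R SL SR rL rR n) i) / real (Eps1 (Gcirc H us vs L R SL SR rL rR n)))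
            - (\<Sum>i\<in>{i::nat. real i \<le> x}.
              real (cgam (Gcirc H us vs L R SL SR rL rR n) i) / real (tGamma1 (Gcirc H us vs L R SL SR rL rR n)))\<bar>)
         \<longlonglongrightarrow> 0"
proof -
  define G where "G n = Gcirc H us vs L R SL SR rL rR n" for n
  define a where "a n = real (Gamma1 (G n)) / real (Eps1 (G n))" for n
  define f where "f n x = \<bar>(\<Sum>i\<in>{i::nat. real i \<le> x}. real (eps (G n) i) / real (Eps1 (G n)))
            - (\<Sum>i\<in>{i::nat. real i \<le> x}. real (cgam (G n) i) / real (tGamma1 (G n)))\<bar>" for n x
  have fe: "finite (edges (G n))" for n unfolding G_def by (rule finite_edges_Gcirc[OF fam])
  have b: "f n x \<le> 2 * a n" for n x unfolding f_def a_def by (rule bound_n[OF fe])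
  have bdd: "bdd_above (range (f n))" for n using b by (intro bdd_aboveI2) 
  have up: "(SUP x. f n x) \<le> 2 * a n" for n by (rule cSUP_least) (auto simp: b)
  have lo: "0 \<le> (SUP x. f n x)" for n
  proof -
    have "f n 0 \<le> (SUP x. f n x)" by (rule cSUP_upper[OF UNIV_I bdd])
    moreover have "0 \<le> f n 0" unfolding f_def by simp
    ultimately show ?thesis by linarith
  qed
  have lim2: "(\<lambda>n. 2 * a n) \<longlonglongrightarrow> 0"
    using tendsto_mult[OF tendsto_const lim, of 2] unfolding a_def G_def by simp
  have "(\<lambda>n. SUP x. f n x) \<longlonglongrightarrow> 0"
    by (rule tendsto_sandwich[OF _ _ tendsto_const lim2]) (auto simp: lo up)
  then show ?thesis unfolding f_def G_def .
qed

end
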